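(* Consider an instance of $P|G=\textit{block graph},p_j=1|C_{\max}$ with $m\ge 2$ identical machines and $n\ge 1$ unit-time jobs whose block conflict graph $G$ has $\omega(G)\le m$, and write $n=d(m-1)+r$ with integers $d\ge 0$ and $r\in\{0,\dots,m-2\}$. The greedy algorithm described in the context returns a schedule in which every machine is assigned at most $\lceil n/(m-1)\rceil$ jobs. Moreover, if $r=0$ then at least one machine is assigned strictly fewer than $\lceil n/(m-1)\rceil$ jobs, and if $r>0$ then at least $m-r$ machines are assigned strictly fewer than $\lceil n/(m-1)\rceil$ jobs.
   Context: Scheduling with a conflict graph: jobs $J$, machines $M=\{M_1,\dots,M_m\}$, conflict graph $G=(J,E)$; a schedule is a map $\sigma:J\to M$ with adjacent jobs on different machines. Here all processing times are $1$, so a machine's load is the number of jobs assigned to it. A block graph is a graph in which every maximal 2-connected component is a clique; a block is a maximal clique; a cut-vertex is a vertex in at least two blocks. The block-cut forest $T_G$ has a node for each block and each cut-vertex, with a block node adjacent to a cut-vertex node iff the cut-vertex lies in the block; each component is rooted arbitrarily. Greedy algorithm: list the blocks in the order of a pre-order traversal of (each component of) the rooted block-cut forest. Process the blocks in this order. For the current block $B$, let $L_J$ be the jobs of $B$ (sorted by non-increasing processing time) and let $L_M$ be the $|B|$ machines of smallest current load, sorted by non-decreasing current load (ties broken arbitrarily). If $B$ has a parent cut-vertex $u$ in $T_G$ that has already been assigned to some machine $M'$, then: if $M'\in L_M$ remove $M'$ from $L_M$, otherwise remove the last machine of $L_M$; and remove $u$ from $L_J$. Then assign the $i$-th job of $L_J$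 to the $i$-th machine of $L_M$ for $i=1,\dots,|L_M|$, updating loads. *)

theory Defs
  imports Complex_Main
begin

text \<open>Conflict graph: finite job set J, symmetric irreflexive edge relation E on J.
  Machines are 0,...,m-1. A (partial) schedule is a map from jobs to machines.\<close>

definition graph :: "'a set \<Rightarrow> ('a \<Rightarrow> 'a \<Rightarrow> bool) \<Rightarrow> bool" where
  "graph J E \<longleftrightarrow> finite J \<and> (\<forall>x y. E x y \<longrightarrow> x \<in> J \<and> y \<in> J) \<and>
     (\<forall>x y. E x y \<longrightarrow> E y x) \<and> (\<forall>x. \<not> E x x)"

definition clique :: "'a set \<Rightarrow> ('a \<Rightarrow> 'a \<Rightarrow> bool) \<Rightarrow> 'a set \<Rightarrow> bool" where
  "clique J E S \<longleftrightarrow> S \<subseteq> J \<and> (\<forall>x\<in>S. \<forall>y\<in>S. x \<noteq> y \<longrightarrow> E x y)"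

definition clique_num_le :: "'a set \<Rightarrow> ('a \<Rightarrow> 'a \<Rightarrow> bool) \<Rightarrow> nat \<Rightarrow> bool" where
  "clique_num_le J E m \<longleftrightarrow> (\<forall>S. clique J E S \<longrightarrow> card S \<le> m)"

definition connected_on :: "('a \<Rightarrow> 'a \<Rightarrow> bool) \<Rightarrow> 'a set \<Rightarrow> bool" where
  "connected_on E S \<longleftrightarrow> (\<forall>x\<in>S. \<forall>y\<in>S. (\<lambda>a b. a \<in> S \<and> b \<in> S \<and> E a b)\<^sup>*\<^sup>* x y)"

text \<open>S induces a 2-connected subgraph (at least two vertices, connected, no cut vertex;
  a single edge counts as 2-connected).\<close>
definition two_connected :: "'a set \<Rightarrow> ('a \<Rightarrow> 'a \<Rightarrow> bool) \<Rightarrow> 'a set \<Rightarrow> bool" where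
  "two_connected J E S \<longleftrightarrow> S \<subseteq> J \<and> card S \<ge> 2 \<and> connected_on E S \<and>
     (\<forall>v\<in>S. connected_on E (S - {v}))"

definition block_graph :: "'a set \<Rightarrow> ('a \<Rightarrow> 'a \<Rightarrow> bool) \<Rightarrow> bool" where
  "block_graph J E \<longleftrightarrow> (\<forall>S. two_connected J E S \<and>
       (\<forall>T. two_connected J E T \<and> S \<subseteq> T \<longrightarrow> T = S) \<longrightarrow> clique J E S)"

definition is_block :: "'a set \<Rightarrow> ('a \<Rightarrow> 'a \<Rightarrow> bool) \<Rightarrow> 'a set \<Rightarrow> bool" where
  "is_block J E B \<longleftrightarrow> clique J E B \<and> B \<noteq> {} \<and> (\<forall>T. clique J E T \<and> B \<subseteq> T \<longrightarrow> T = B)"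

definition is_cut :: "'a set \<Rightarrow> ('a \<Rightarrow> 'a \<Rightarrow> bool) \<Rightarrow> 'a \<Rightarrow> bool" where
  "is_cut J E v \<longleftrightarrow> (\<exists>B1 B2. is_block J E B1 \<and> is_block J E B2 \<and> B1 \<noteq> B2 \<and> v \<in> B1 \<and> v \<in> B2)"

text \<open>Nodes and edges of the block-cut forest T_G: Inl B for a block, Inr v for a cut vertex.\<close>
definition bc_node :: "'a set \<Rightarrow> ('a \<Rightarrow> 'a \<Rightarrow> bool) \<Rightarrow> ('a set + 'a) \<Rightarrow> bool" where
  "bc_node J E x \<longleftrightarrow> (case x of Inl B \<Rightarrow> is_block J E B | Inr v \<Rightarrow> is_cut J E v)"

definition bc_adj :: "'a set \<Rightarrow> ('a \<Rightarrow> 'a \<Rightarrow> bool) \<Rightarrow> ('a set + 'a) \<Rightarrow> ('a set + 'a) \<Rightarrow> bool" where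
  "bc_adj J E x y \<longleftrightarrow>
     (\<exists>B v. is_block J E B \<and> is_cut J E v \<and> v \<in> B \<and>
        ((x = Inl B \<and> y = Inr v) \<or> (x = Inr v \<and> y = Inl B)))"

text \<open>Nodes with no
  parent are the roots (one per component).\<close>
definition rooting :: "'a set \<Rightarrow> ('a \<Rightarrow> 'a \<Rightarrow> bool) \<Rightarrow> (('a set + 'a) \<Rightarrow> ('a set + 'a) option) \<Rightarrow> bool" where
  "rooting J E par \<longleftrightarrow>
     (\<forall>x y. par x = Some y \<longrightarrow> bc_node J E x \<and> bc_adj J E x y) \<and>
     (\<forall>x y. bc_adj J E x y \<longrightarrow> par x = Some y \<or> par y = Some x) \<and>
     (\<forall>x. \<not> (\<lambda>a b. par a = Some b)\<^sup>+\<^sup>+ x x)"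

text \<open>anc par x y: x is an ancestor of y or x = y.\<close>
definition anc :: "('n \<Rightarrow> 'n option) \<Rightarrow> 'n \<Rightarrow> 'n \<Rightarrow> bool" where
  "anc par x y \<longleftrightarrow> (\<lambda>a b. par a = Some b)\<^sup>*\<^sup>* y x"

definition preorder_traversal :: "('n \<Rightarrow> 'n option) \<Rightarrow> 'n set \<Rightarrow> 'n list \<Rightarrow> bool" where
  "preorder_traversal par N ns \<longleftrightarrow> distinct ns \<and> set ns = N \<and>
     (\<forall>i j. i < length ns \<and> j < length ns \<and> anc par (ns ! i) (ns ! j) \<longrightarrow> i \<le> j) \<and>
     (\<forall>i j k. i < j \<and> j < k \<and> k < length ns \<and> anc par (ns ! i) (ns ! k) \<longrightarrow> anc par (ns ! i) (ns ! j))"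

definition load :: "('a \<rightharpoonup> nat) \<Rightarrow> nat \<Rightarrow> nat" where
  "load \<sigma> M = card {j. \<sigma> j = Some M}"

text \<open>Ls lists k machines of smallest current load, sorted by non-decreasing load
  (ties broken arbitrarily).\<close>
definition smallest_machines :: "nat \<Rightarrow> ('a \<rightharpoonup> nat) \<Rightarrow> nat \<Rightarrow> nat list \<Rightarrow> bool" where
  "smallest_machines m \<sigma> k Ls \<longleftrightarrow> distinct Ls \<and> length Ls = k \<and> set Ls \<subseteq> {..<m} \<and>
     sorted (map (load \<sigma>) Ls) \<and>
     (\<forall>M \<in> {..<m} - set Ls. \<forall>M' \<in> set Ls. load \<sigma> M' \<le> load \<sigma> M)"

definition assigned_parent :: "(('a set + 'a) \<Rightarrow> ('a set + 'a) option) \<Rightarrow> ('a \<rightharpoonup> nat) \<Rightarrow> 'a set \<Rightarrow> 'a option" where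
  "assigned_parent par \<sigma> B =
     (case par (Inl B) of Some (Inr u) \<Rightarrow> (if \<sigma> u \<noteq> None then Some u else None) | _ \<Rightarrow> None)"

definition greedy_step :: "nat \<Rightarrow> ('a \<rightharpoonup> nat) \<Rightarrow> 'a set \<Rightarrow> 'a option \<Rightarrow> ('a \<rightharpoonup> nat) \<Rightarrow> bool" where
  "greedy_step m \<sigma> B pu \<sigma>' \<longleftrightarrow>
     (\<exists>Ls Lj. smallest_machines m \<sigma> (card B) Ls \<and> distinct Lj \<and> set Lj = B \<and>
       (case pu of
          None \<Rightarrow> \<sigma>' = \<sigma> ++ map_of (zip Lj Ls)
        | Some u \<Rightarrow> (\<exists>M'. \<sigma> u = Some M' \<and>
             \<sigma>' = \<sigma> ++ map_of (zip (remove1 u Lj)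
                        (if M' \<in> set Ls then remove1 M' Ls else butlast Ls)))))"

inductive greedy_exec :: "nat \<Rightarrow> (('a set + 'a) \<Rightarrow> ('a set + 'a) option) \<Rightarrow> ('a \<rightharpoonup> nat) \<Rightarrow> 'a set list \<Rightarrow> ('a \<rightharpoonup> nat) \<Rightarrow> bool"
  for m par where
  exec_nil: "greedy_exec m par \<sigma> [] \<sigma>"
| exec_cons: "greedy_step m \<sigma> B (assigned_parent par \<sigma> B) \<sigma>' \<Longrightarrow> greedy_exec m par \<sigma>' Bs \<sigma>''
         \<Longrightarrow> greedy_exec m par \<sigma> (B # Bs) \<sigma>''"

text \<open>sigma is a possible output of the greedy algorithm (for some rooting, some pre-order
  traversal and some tie-breaking).\<close>
definition greedy_output :: "'a set \<Rightarrow> ('a \<Rightarrow> 'a \<Rightarrow> bool) \<Rightarrow> nat \<Rightarrow> ('a \<rightharpoonup> nat) \<Rightarrow> bool" where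
  "greedy_output J E m \<sigma> \<longleftrightarrow>
     (\<exists>par ns. rooting J E par \<and> preorder_traversal par {x. bc_node J E x} ns \<and>
        greedy_exec m par Map.empty (map projl (filter isl ns)) \<sigma>)"

definition is_schedule :: "'a set \<Rightarrow> ('a \<Rightarrow> 'a \<Rightarrow> bool) \<Rightarrow> nat \<Rightarrow> ('a \<rightharpoonup> nat) \<Rightarrow> bool" where
  "is_schedule J E m \<sigma> \<longleftrightarrow> dom \<sigma> = J \<and> ran \<sigma> \<subseteq> {..<m} \<and>
     (\<forall>x y. E x y \<longrightarrow> \<sigma> x \<noteq> \<sigma> y)"

end

theory Submission imports Defs begin


lemma zip_some_iff:
  assumes "distinct xs" "length xs = length ys"
  shows "map_of (zip xs ys) j = Some M \<longleftrightarrow> (j, M) \<in> set (zip xs ys)"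
  using assms by (simp add: map_of_eq_Some_iff)

lemma zip_fiber:
  assumes "distinct xs" "distinct ys" "length xs = length ys"
  shows "card {j. map_of (zip xs ys) j = Some M} = (if M \<in> set ys then 1 else 0)"
proof -
  have eq: "{j. map_of (zip xs ys) j = Some M} = {j. map_of (zip ys xs) M = Some j}"
  proof -
    have "(j, M) \<in> set (zip xs ys) \<longleftrightarrow> (M, j) \<in> set (zip ys xs)" for j
      by (metis in_set_zip prod.sel assms(3))
    then show ?thesis using assms zip_some_iff[of xs ys] zip_some_iff[of ys xs] by auto
  qed
  show ?thesis
  proof (cases "M \<in> set ys")
    case True
    then obtain j0 where j0: "map_of (zip ys xs) M = Some j0" using assms
      by (metis domD dom_map_of_zip)
    then have "{j. map_of (zip ys xs) M = Some j} = {j0}" by auto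
    then show ?thesis using eq True by simp
  next
    case False
    then have "map_of (zip ys xs) M = None" using assms
      by (metis domIff dom_map_of_zip)
    then show ?thesis using eq False by simp
  qed
qed

lemma zip_inj:
  assumes "distinct xs" "distinct ys" "length xs = length ys"
  shows "inj_on (map_of (zip xs ys)) (set xs)"
proof
  fix a b assume a: "a \<in> set xs" and b: "b \<in> set xs" and e: "map_of (zip xs ys) a = map_of (zip xs ys) b"
  obtain y where y: "map_of (zip xs ys) a = Some y" using a assms by (metis domD dom_map_of_zip)
  have 1: "(a, y) \<in> set (zip xs ys)" "(b, y) \<in> set (zip xs ys)" using y e assms zip_some_iff by metis+
  have "(y, a) \<in> set (zip ys xs)" "(y, b) \<in> set (zip ys xs)" using 1 by (metis in_set_zip prod.sel assms(3))+
  then show "a = b" using assms zip_some_iff[of ys xs] by (metis option.inject)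
qed

lemma add_fresh:
  fixes \<sigma> :: "'a \<rightharpoonup> nat"
  assumes "distinct xs" "distinct ys" "length xs = length ys" "set xs \<inter> dom \<sigma> = {}"
    "finite (dom \<sigma>)"
  defines "\<sigma>' \<equiv> \<sigma> ++ map_of (zip xs ys)"
  shows "dom \<sigma>' = dom \<sigma> \<union> set xs" "\<sigma> \<subseteq>\<^sub>m \<sigma>'" "ran \<sigma>' \<subseteq> ran \<sigma> \<union> set ys"
    "\<And>M. load \<sigma>' M = load \<sigma> M + (if M \<in> set ys then 1 else 0)"
    "\<And>x. x \<in> set xs \<Longrightarrow> \<sigma>' x = map_of (zip xs ys) x"
    "\<And>x. x \<in> set xs \<Longrightarrow> \<sigma>' x \<in> Some ` set ys"
proof -
  let ?N = "map_of (zip xs ys)"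
  have dN: "dom ?N = set xs" using assms by simp
  show "dom \<sigma>' = dom \<sigma> \<union> set xs" using dN unfolding \<sigma>'_def by auto
  show "\<sigma> \<subseteq>\<^sub>m \<sigma>'" unfolding map_le_def \<sigma>'_def
  proof (intro ballI)
    fix a assume "a \<in> dom \<sigma>"
    then have "?N a = None" using dN assms(4) by blast
    then show "\<sigma> a = (\<sigma> ++ ?N) a" by (simp add: map_add_def)
  qed
  show "ran \<sigma>' \<subseteq> ran \<sigma> \<union> set ys"
    unfolding \<sigma>'_def using ran_map_add[of \<sigma> ?N] assms dN ran_map_of_zip[of xs ys]
    by (metis Int_commute dual_order.refl)
  show fx: "\<And>x. x \<in> set xs \<Longrightarrow> \<sigma>' x = ?N x"
    unfolding \<sigma>'_def using dN by (metis domD map_add_find_right)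
  show "\<And>x. x \<in> set xs \<Longrightarrow> \<sigma>' x \<in> Some ` set ys"
  proof -
    fix x assume x: "x \<in> set xs"
    obtain y where y: "?N x = Some y" using x dN by blast
    then have "(x, y) \<in> set (zip xs ys)" by (auto dest: map_of_SomeD)
    then have "y \<in> set ys" by (rule set_zip_rightD)
    then show "\<sigma>' x \<in> Some ` set ys" using fx[OF x] y by simp
  qed
  fix M
  have split: "{j. \<sigma>' j = Some M} = {j. \<sigma> j = Some M} \<union> {j. ?N j = Some M}"
  proof -
    have "\<sigma>' j = Some M \<longleftrightarrow> \<sigma> j = Some M \<or> ?N j = Some M" for j
    proof (cases "?N j")
      case None then show ?thesis unfolding \<sigma>'_def by (simp add: map_add_def)
    next
      case (Some y)
      then have "j \<in> set xs" using dN by blast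
      then have "\<sigma> j = None" using assms(4) by blast
      then show ?thesis using Some unfolding \<sigma>'_def by (simp add: map_add_def)
    qed
    then show ?thesis by blast
  qed
  have disj: "{j. \<sigma> j = Some M} \<inter> {j. ?N j = Some M} = {}"
    using assms(4) dN by blast
  have f1: "finite {j. \<sigma> j = Some M}"
    using assms(5) by (rule finite_subset[rotated]) blast
  have f2: "finite {j. ?N j = Some M}"
    by (rule finite_subset[of _ "set xs"]) (use dN in blast, simp)
  show "load \<sigma>' M = load \<sigma> M + (if M \<in> set ys then 1 else 0)"
    unfolding load_def split card_Un_disjoint[OF f1 f2 disj]
    using zip_fiber[OF assms(1-3)] by simp
qed



definition Inv :: "nat \<Rightarrow> (nat \<Rightarrow> nat) \<Rightarrow> nat \<Rightarrow> bool" where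
  "Inv m f s \<longleftrightarrow> (\<forall>M<m. f M \<le> s div (m-1) + 1) \<and> card {M. M<m \<and> s div (m-1) < f M} \<le> s mod (m-1)"

lemma inv_step:
  fixes f g :: "nat \<Rightarrow> nat"
  assumes m2: "m \<ge> 2" and ST: "S \<subseteq> T" "T \<subseteq> {..<m}" "card T \<le> card S + 1"
    and small: "\<forall>M\<in>T. \<forall>M'\<in>{..<m}-T. f M \<le> f M'"
    and g: "\<And>M. g M = f M + (if M \<in> S then 1 else 0)"
    and inv: "Inv m f s"
  shows "Inv m g (s + card S)"
proof -
  define K where "K = m - 1"
  define q where "q = s div K"
  define r where "r = s mod K"
  define j where "j = card S"
  have K1: "K \<ge> 1" using m2 K_def by simp
  have rK: "r < K" using K1 r_def by simp
  have sq: "s = q * K + r" using q_def r_def by simp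
  have finT: "finite T" using ST(2) finite_subset by blast
  have jle: "j \<le> m" using ST finT j_def card_mono[of T S] card_mono[of "{..<m}" T] by simp
  define H where "H = {M. M<m \<and> q < f M}"
  have fle: "\<forall>M<m. f M \<le> q + 1" using inv unfolding Inv_def q_def K_def by simp
  have Hle: "card H \<le> r" using inv unfolding Inv_def H_def q_def r_def K_def by simp
  have finH: "finite H" unfolding H_def by simp
  have gle: "\<forall>M<m. g M \<le> q + 2"
  proof (intro allI impI)
    fix M assume "M < m" then show "g M \<le> q + 2" using fle[rule_format, of M] g[of M] by simp
  qed
  have Sm: "S \<subseteq> {..<m}" using ST by blast
  have compl: "{..<m} - T \<subseteq> H" if "M0 \<in> S" "q < f M0" for M0
  proof
    fix M' assume "M' \<in> {..<m} - T"
    then have "f M0 \<le> f M'" "M' < m" using small that ST by auto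
    then show "M' \<in> H" using that unfolding H_def by simp
  qed
  have cardc: "card ({..<m} - T) = m - card T" using ST finT by (simp add: card_Diff_subset)
  consider (A) "r + j < K" | (Bc) "K \<le> r + j" "r + j < 2 * K" | (C) "r + j = 2 * K"
    using rK jle K_def j_def by linarith
  then show ?thesis
  proof cases
    case A
    have d: "(s + j) div K = q" "(s + j) mod K = r + j"
      proof -
      have e: "s + j = (r + j) + q * K" using sq by simp
      show "(s + j) div K = q" "(s + j) mod K = r + j" unfolding e
        using K1 A by (simp_all add: div_mult_self1 mod_mult_self1)
    qed
    have noH: "\<forall>M\<in>S. f M \<le> q"
    proof (rule ccontr)
      assume "\<not> (\<forall>M\<in>S. f M \<le> q)"
      then obtain M0 where "M0 \<in> S" "q < f M0" by auto
      then have "{..<m} - T \<subseteq> H" by (rule compl)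
      then have "m - card T \<le> card H" using card_mono[OF finH] cardc by metis
      then show False using Hle A ST(3) j_def K_def m2 by linarith
    qed
    have g1: "\<forall>M<m. g M \<le> q + 1" using noH fle g by (metis add.right_neutral add_le_mono1)
    have "{M. M<m \<and> q < g M} \<subseteq> H \<union> S" using g unfolding H_def by auto
    then have "card {M. M<m \<and> q < g M} \<le> card (H \<union> S)"
      using finH finT ST by (intro card_mono) (auto intro: finite_subset)
    also have "\<dots> \<le> card H + card S" by (rule card_Un_le)
    finally have "card {M. M<m \<and> q < g M} \<le> r + j" using Hle j_def by linarith
    then show ?thesis unfolding Inv_def using d g1 K_def j_def by simp
  next
    case Bc
    have d: "(s + j) div K = q + 1" "(s + j) mod K = r + j - K"
    proof -
      have e: "s + j = (r + j - K) + (q + 1) * K" using sq Bc by (simp add: algebra_simps)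
      have l: "r + j - K < K" using Bc by linarith
      show "(s + j) div K = q + 1" "(s + j) mod K = r + j - K" unfolding e
        using K1 l by (simp_all only: div_mult_self1 mod_mult_self1 div_less mod_less)
    qed
    have sub: "{M. M<m \<and> q + 1 < g M} \<subseteq> H \<inter> S" unfolding H_def
    proof
      fix M assume "M \<in> {M. M<m \<and> q + 1 < g M}"
      then have M: "M < m" "q + 1 < g M" by auto
      have "f M \<le> q + 1" using fle M by simp
      then have "M \<in> S" "q < f M" using M g[of M] by (auto split: if_splits)
      then show "M \<in> {M. M < m \<and> q < f M} \<inter> S" using M by simp
    qed
    have "card (H \<inter> S) \<le> r + j - K"
    proof (cases "H \<inter> S = {}")
      case True then show ?thesis by simp
    next
      case False
      then obtain M0 where "M0 \<in> S" "q < f M0" unfolding H_def by auto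
      then have c: "{..<m} - T \<subseteq> H" by (rule compl)
      have "(H \<inter> S) \<union> ({..<m} - T) \<subseteq> H" using c by blast
      moreover have "(H \<inter> S) \<inter> ({..<m} - T) = {}" using ST by blast
      ultimately have "card (H \<inter> S) + card ({..<m} - T) \<le> card H"
        using finH by (metis card_Un_disjoint card_mono finite_Un finite_subset)
      then show ?thesis using cardc Hle ST(3) j_def K_def Bc by linarith
    qed
    then have "card {M. M<m \<and> q + 1 < g M} \<le> r + j - K"
      using sub finH by (meson card_mono finite_Int le_trans)
    then show ?thesis unfolding Inv_def using d gle K_def j_def by simp
  next
    case C
    have d: "(s + j) div K = q + 2" "(s + j) mod K = 0"
    proof -
      have e: "s + j = (q + 2) * K" using sq C by (simp add: algebra_simps)
      show "(s + j) div K = q + 2" "(s + j) mod K = 0" unfolding e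
        using K1 by simp_all
    qed
    have "{M. M<m \<and> q + 2 < g M} = {}" using gle by force
    moreover have "\<forall>M<m. g M \<le> q + 2 + 1" using gle by (simp add: le_SucI)
    ultimately show ?thesis unfolding Inv_def using d K_def j_def by simp
  qed
qed



lemma step_main:
  fixes \<sigma> :: "'a \<rightharpoonup> nat"
  assumes st: "greedy_step m \<sigma> B (assigned_parent par \<sigma> B) \<sigma>'"
    and fr: "B \<inter> dom \<sigma> \<subseteq> {u. par (Inl B) = Some (Inr u)}"
    and pu: "\<And>u. par (Inl B) = Some (Inr u) \<Longrightarrow> u \<in> B"
    and fin: "finite (dom \<sigma>)"
  shows "dom \<sigma>' = dom \<sigma> \<union> B \<and> \<sigma> \<subseteq>\<^sub>m \<sigma>' \<and> ran \<sigma>' \<subseteq> ran \<sigma> \<union> {..<m} \<and> inj_on \<sigma>' B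
    \<and> (\<exists>S T. S \<subseteq> T \<and> T \<subseteq> {..<m} \<and> card T \<le> card S + 1
        \<and> (\<forall>M\<in>T. \<forall>M'\<in>{..<m}-T. load \<sigma> M \<le> load \<sigma> M')
        \<and> (\<forall>M. load \<sigma>' M = load \<sigma> M + (if M \<in> S then 1 else 0))
        \<and> card S = card (B - dom \<sigma>))"
proof (cases "assigned_parent par \<sigma> B")
  case None
  from st[unfolded None greedy_step_def] obtain Ls Lj where
    sm: "smallest_machines m \<sigma> (card B) Ls" and dLj: "distinct Lj" "set Lj = B"
    and s': "\<sigma>' = \<sigma> ++ map_of (zip Lj Ls)" by auto
  have Bd: "B \<inter> dom \<sigma> = {}"
  proof (rule ccontr)
    assume "B \<inter> dom \<sigma> \<noteq> {}"
    then obtain x where x: "x \<in> B" "x \<in> dom \<sigma>" by blast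
    then have "par (Inl B) = Some (Inr x)" using fr by blast
    then have "assigned_parent par \<sigma> B = Some x" using x unfolding assigned_parent_def by auto
    then show False using None by simp
  qed
  have len: "length Lj = length Ls" using sm dLj distinct_card[of Lj]
    unfolding smallest_machines_def by simp
  have dLs: "distinct Ls" using sm unfolding smallest_machines_def by simp
  note af = add_fresh[OF dLj(1) dLs len _ fin, unfolded dLj(2), OF Bd, folded s']
  have inj: "inj_on \<sigma>' B"
  proof -
    have "inj_on (map_of (zip Lj Ls)) B" using zip_inj[OF dLj(1) dLs len] dLj by simp
    then show ?thesis using af(5) by (simp add: inj_on_def)
  qed
  have "ran \<sigma>' \<subseteq> ran \<sigma> \<union> {..<m}" using af(3) sm unfolding smallest_machines_def by blast
  moreover have "\<exists>S T. S \<subseteq> T \<and> T \<subseteq> {..<m} \<and> card T \<le> card S + 1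
        \<and> (\<forall>M\<in>T. \<forall>M'\<in>{..<m}-T. load \<sigma> M \<le> load \<sigma> M')
        \<and> (\<forall>M. load \<sigma>' M = load \<sigma> M + (if M \<in> S then 1 else 0))
        \<and> card S = card (B - dom \<sigma>)"
  proof (intro exI conjI)
    show "set Ls \<subseteq> set Ls" by simp
    show "set Ls \<subseteq> {..<m}" using sm unfolding smallest_machines_def by simp
    show "card (set Ls) \<le> card (set Ls) + 1" by simp
    show "\<forall>M\<in>set Ls. \<forall>M'\<in>{..<m}-set Ls. load \<sigma> M \<le> load \<sigma> M'"
      using sm unfolding smallest_machines_def by blast
    show "\<forall>M. load \<sigma>' M = load \<sigma> M + (if M \<in> set Ls then 1 else 0)" using af(4) by blast
    show "card (set Ls) = card (B - dom \<sigma>)" using Bd sm dLs distinct_card[of Ls]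
      unfolding smallest_machines_def by (simp add: Diff_triv)
  qed
  ultimately show ?thesis using af(1,2) inj by blast
next
  case (Some u)
  then have pu': "par (Inl B) = Some (Inr u)" and su: "\<sigma> u \<noteq> None"
    unfolding assigned_parent_def by (auto split: option.splits sum.splits if_splits)
  have uB: "u \<in> B" using pu pu' by blast
  from st[unfolded Some greedy_step_def] obtain Ls Lj M' where
    sm: "smallest_machines m \<sigma> (card B) Ls" and dLj: "distinct Lj" "set Lj = B"
    and M': "\<sigma> u = Some M'"
    and s': "\<sigma>' = \<sigma> ++ map_of (zip (remove1 u Lj) (if M' \<in> set Ls then remove1 M' Ls else butlast Ls))"
    by auto
  define Ls' where "Ls' = (if M' \<in> set Ls then remove1 M' Ls else butlast Ls)"
  define Lj' where "Lj' = remove1 u Lj"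
  have dLs: "distinct Ls" using sm unfolding smallest_machines_def by simp
  have lLs: "length Ls = card B" using sm unfolding smallest_machines_def by simp
  have dLs': "distinct Ls'" unfolding Ls'_def using dLs by (simp add: distinct_butlast)
  have dLj': "distinct Lj'" unfolding Lj'_def using dLj by simp
  have sLj': "set Lj' = B - {u}" unfolding Lj'_def using dLj by simp
  have lLj: "length Lj = card B" using dLj distinct_card by fastforce
  have len: "length Lj' = length Ls'" unfolding Lj'_def Ls'_def using lLj lLs uB dLj
    by (simp add: length_remove1)
  have finB: "finite B" using dLj(2) by blast
  have Bd: "B \<inter> dom \<sigma> = {u}" using fr pu' uB su by auto
  have Bd': "set Lj' \<inter> dom \<sigma> = {}" using Bd sLj' by blast
  note af = add_fresh[OF dLj' dLs' len Bd' fin, folded Ls'_def Lj'_def, folded s'[folded Ls'_def Lj'_def]]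
  have s'u: "\<sigma>' u = Some M'"
  proof -
    have "u \<in> dom \<sigma>" using su by blast
    then show ?thesis using af(2) M' by (metis map_le_def)
  qed
  have M'nin: "M' \<notin> set Ls'" unfolding Ls'_def using dLs
    by (auto dest: in_set_butlastD)
  have SsubT: "set Ls' \<subseteq> set Ls" unfolding Ls'_def by (auto dest: in_set_butlastD set_remove1_subset[THEN subsetD])
  have inj: "inj_on \<sigma>' B"
  proof (rule inj_onI)
    fix x y assume x: "x \<in> B" and y: "y \<in> B" and e: "\<sigma>' x = \<sigma>' y"
    have img: "z \<in> B - {u} \<Longrightarrow> \<sigma>' z \<in> Some ` set Ls'" for z using af(6) sLj' by blast
    show "x = y"
    proof (cases "x = u \<or> y = u")
      case True
      then show ?thesis using img s'u e M'nin x y by (metis DiffI image_iff option.inject singletonD)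
    next
      case False
      then have "x \<in> set Lj'" "y \<in> set Lj'" using x y sLj' by auto
      then show ?thesis using zip_inj[OF dLj' dLs' len] af(5) e by (metis inj_on_def)
    qed
  qed
  have ran: "ran \<sigma>' \<subseteq> ran \<sigma> \<union> {..<m}" using af(3) sm SsubT unfolding smallest_machines_def by blast
  have ex: "\<exists>S T. S \<subseteq> T \<and> T \<subseteq> {..<m} \<and> card T \<le> card S + 1
        \<and> (\<forall>M\<in>T. \<forall>M'\<in>{..<m}-T. load \<sigma> M \<le> load \<sigma> M')
        \<and> (\<forall>M. load \<sigma>' M = load \<sigma> M + (if M \<in> S then 1 else 0))
        \<and> card S = card (B - dom \<sigma>)"
  proof (intro exI conjI)
    show "set Ls' \<subseteq> set Ls" by (rule SsubT)
    show "set Ls \<subseteq> {..<m}" using sm unfolding smallest_machines_def by simp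
    have cB: "card (B - dom \<sigma>) = card B - 1" 
    proof -
      have "B - dom \<sigma> = B - {u}" using Bd by blast
      then show ?thesis using uB finB by simp
    qed
    show c': "card (set Ls') = card (B - dom \<sigma>)" 
    proof -
      have "card (set Ls') = length Lj'" using distinct_card[OF dLs'] len by simp
      also have "\<dots> = card (B - {u})" using distinct_card[OF dLj'] sLj' by simp
      finally show ?thesis using cB uB finB by simp
    qed
    show "card (set Ls) \<le> card (set Ls') + 1" using c' cB distinct_card[OF dLs] lLs by linarith
    show "\<forall>M\<in>set Ls. \<forall>M'\<in>{..<m}-set Ls. load \<sigma> M \<le> load \<sigma> M'"
      using sm unfolding smallest_machines_def by blast
    show "\<forall>M. load \<sigma>' M = load \<sigma> M + (if M \<in> set Ls' then 1 else 0)" using af(4) by blast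
  qed
  have d: "dom \<sigma>' = dom \<sigma> \<union> B"
  proof -
    have "dom \<sigma>' = dom \<sigma> \<union> (B - {u})" using af(1) sLj' by simp
    also have "\<dots> = dom \<sigma> \<union> B" using Bd by auto
    finally show ?thesis .
  qed
  show ?thesis by (rule conjI[OF d conjI[OF af(2) conjI[OF ran conjI[OF inj ex]]]])
qed



fun fresh_ok :: "(('a set + 'a) \<Rightarrow> ('a set + 'a) option) \<Rightarrow> 'a set \<Rightarrow> 'a set list \<Rightarrow> bool" where
  "fresh_ok par D [] = True"
| "fresh_ok par D (B # Bs) = (B \<inter> D \<subseteq> {u. par (Inl B) = Some (Inr u)} \<and> fresh_ok par (D \<union> B) Bs)"

lemma exec_main:
  fixes \<sigma> :: "'a \<rightharpoonup> nat"
  assumes "greedy_exec m par \<sigma> Bs \<sigma>'"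
  shows "fresh_ok par (dom \<sigma>) Bs \<Longrightarrow> (\<forall>B\<in>set Bs. \<forall>u. par (Inl B) = Some (Inr u) \<longrightarrow> u \<in> B)
    \<Longrightarrow> finite (dom \<sigma>) \<Longrightarrow> ran \<sigma> \<subseteq> {..<m} \<Longrightarrow> m \<ge> 2 \<Longrightarrow> Inv m (load \<sigma>) (card (dom \<sigma>))
    \<Longrightarrow> dom \<sigma>' = dom \<sigma> \<union> \<Union>(set Bs) \<and> \<sigma> \<subseteq>\<^sub>m \<sigma>' \<and> ran \<sigma>' \<subseteq> {..<m}
        \<and> (\<forall>B\<in>set Bs. inj_on \<sigma>' B) \<and> Inv m (load \<sigma>') (card (dom \<sigma>'))"
  using assms
proof (induction rule: greedy_exec.induct)
  case (exec_nil \<sigma>)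
  then show ?case by simp
next
  case (exec_cons \<sigma> B \<sigma>1 Bs \<sigma>'')
  have fr: "B \<inter> dom \<sigma> \<subseteq> {u. par (Inl B) = Some (Inr u)}" "fresh_ok par (dom \<sigma> \<union> B) Bs"
    using exec_cons.prems(1) by simp_all
  have pu: "\<And>u. par (Inl B) = Some (Inr u) \<Longrightarrow> u \<in> B" using exec_cons.prems(2) by simp
  note sm = step_main[OF exec_cons.hyps(1) fr(1) pu exec_cons.prems(3)]
  have d1: "dom \<sigma>1 = dom \<sigma> \<union> B" and le1: "\<sigma> \<subseteq>\<^sub>m \<sigma>1" and ran1: "ran \<sigma>1 \<subseteq> {..<m}"
    and inj1: "inj_on \<sigma>1 B"
    using sm exec_cons.prems(4) by blast+
  obtain S T where ST: "S \<subseteq> T" "T \<subseteq> {..<m}" "card T \<le> card S + 1"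
    "\<forall>M\<in>T. \<forall>M'\<in>{..<m}-T. load \<sigma> M \<le> load \<sigma> M'"
    "\<forall>M. load \<sigma>1 M = load \<sigma> M + (if M \<in> S then 1 else 0)"
    "card S = card (B - dom \<sigma>)" using sm by blast
  have finB: "finite B"
  proof -
    have "B \<subseteq> dom \<sigma>1" using d1 by blast
    moreover have "finite (dom \<sigma>1)"
      using exec_cons.hyps(1) unfolding greedy_step_def
      by (metis d1 List.finite_set exec_cons.prems(3) finite_Un)
    ultimately show ?thesis by (rule finite_subset)
  qed
  have fin1: "finite (dom \<sigma>1)" using d1 finB exec_cons.prems(3) by simp
  have c1: "card (dom \<sigma>1) = card (dom \<sigma>) + card S"
  proof -
    have "dom \<sigma>1 = dom \<sigma> \<union> (B - dom \<sigma>)" using d1 by blast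
    moreover have "card (dom \<sigma> \<union> (B - dom \<sigma>)) = card (dom \<sigma>) + card (B - dom \<sigma>)"
      using finB exec_cons.prems(3) by (intro card_Un_disjoint) auto
    ultimately show ?thesis using ST(6) by simp
  qed
  have inv1: "Inv m (load \<sigma>1) (card (dom \<sigma>1))" unfolding c1
    using inv_step[OF exec_cons.prems(5) ST(1-4), of "load \<sigma>1"] ST(5) exec_cons.prems(6) by blast
  have IH: "dom \<sigma>'' = dom \<sigma>1 \<union> \<Union>(set Bs) \<and> \<sigma>1 \<subseteq>\<^sub>m \<sigma>'' \<and> ran \<sigma>'' \<subseteq> {..<m}
        \<and> (\<forall>B\<in>set Bs. inj_on \<sigma>'' B) \<and> Inv m (load \<sigma>'') (card (dom \<sigma>''))"
  proof (rule exec_cons.IH)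
    show "fresh_ok par (dom \<sigma>1) Bs" using fr(2) d1 by simp
    show "\<forall>B\<in>set Bs. \<forall>u. par (Inl B) = Some (Inr u) \<longrightarrow> u \<in> B" using exec_cons.prems(2) by simp
  qed (use fin1 ran1 exec_cons.prems(5) inv1 in auto)
  have le: "\<sigma>1 \<subseteq>\<^sub>m \<sigma>''" using IH by blast
  have injB: "inj_on \<sigma>'' B"
  proof -
    have "\<forall>x\<in>B. \<sigma>'' x = \<sigma>1 x" using le d1 by (auto simp: map_le_def)
    then show ?thesis using inj1 by (metis inj_on_cong)
  qed
  show ?case using IH d1 injB map_le_trans[OF le1 le] by auto
qed



lemma block_share:
  assumes root: "rooting J E par" and B: "is_block J E B" and B': "is_block J E B'"
    and ne: "B \<noteq> B'" and x: "x \<in> B" "x \<in> B'"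
  shows "par (Inl B') = Some (Inr x) \<or> (par (Inl B) = Some (Inr x) \<and> par (Inr x) = Some (Inl B'))"
proof -
  have cut: "is_cut J E x" unfolding is_cut_def using B B' ne x by blast
  have a1: "bc_adj J E (Inl B) (Inr x)" and a2: "bc_adj J E (Inl B') (Inr x)"
    unfolding bc_adj_def using B B' cut x by blast+
  have o: "\<forall>x y. bc_adj J E x y \<longrightarrow> par x = Some y \<or> par y = Some x"
    using root unfolding rooting_def by blast
  show ?thesis using o[rule_format, OF a1] o[rule_format, OF a2] ne by auto
qed

lemma fresh_from_order:
  assumes root: "rooting J E par"
  shows "distinct xs \<Longrightarrow> sorted_wrt (\<lambda>a b. \<not> anc par b a) xs \<Longrightarrow> (\<forall>x\<in>set xs. bc_node J E x)
   \<Longrightarrow> (\<forall>B. Inl B \<in> set xs \<longrightarrow> B \<inter> D \<subseteq> {u. par (Inl B) = Some (Inr u)})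
   \<Longrightarrow> fresh_ok par D (map projl (filter isl xs))"
proof (induction xs arbitrary: D)
  case Nil
  then show ?case by simp
next
  case (Cons x xs)
  show ?case
  proof (cases x)
    case (Inr v)
    then show ?thesis using Cons by simp
  next
    case (Inl B)
    have Bb: "is_block J E B" using Cons.prems(3) Inl unfolding bc_node_def by simp
    have h1: "B \<inter> D \<subseteq> {u. par (Inl B) = Some (Inr u)}" using Cons.prems(4) Inl by simp
    have h2: "\<forall>B'. Inl B' \<in> set xs \<longrightarrow> B' \<inter> (D \<union> B) \<subseteq> {u. par (Inl B') = Some (Inr u)}"
    proof (intro allI impI subsetI)
      fix B' y assume B'in: "Inl B' \<in> set xs" and y: "y \<in> B' \<inter> (D \<union> B)"
      show "y \<in> {u. par (Inl B') = Some (Inr u)}"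
      proof (cases "y \<in> D")
        case True then show ?thesis using Cons.prems(4) B'in y by auto
      next
        case False
        then have yB: "y \<in> B" "y \<in> B'" using y by auto
        have ne: "B \<noteq> B'" using Cons.prems(1) Inl B'in by auto
        have B'b: "is_block J E B'" using Cons.prems(3) B'in unfolding bc_node_def by force
        have nanc: "\<not> anc par (Inl B') (Inl B)" using Cons.prems(2) Inl B'in by simp
        have "\<not> (par (Inl B) = Some (Inr y) \<and> par (Inr y) = Some (Inl B'))"
        proof
          assume "par (Inl B) = Some (Inr y) \<and> par (Inr y) = Some (Inl B')"
          then have "(\<lambda>a b. par a = Some b)\<^sup>*\<^sup>* (Inl B) (Inl B')"
            by (meson converse_rtranclp_into_rtranclp rtranclp.rtrancl_refl)
          then show False using nanc unfolding anc_def by simp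
        qed
        then show ?thesis using block_share[OF root Bb B'b ne yB] by blast
      qed
    qed
    have "fresh_ok par (D \<union> B) (map projl (filter isl xs))"
      using Cons.IH[of "D \<union> B"] Cons.prems h2 by simp
    then show ?thesis using Inl h1 by simp
  qed
qed

lemma clique_in_block:
  assumes g: "graph J E" and c: "clique J E S0" and ne: "S0 \<noteq> {}"
  shows "\<exists>B. is_block J E B \<and> S0 \<subseteq> B"
proof -
  define C where "C = {S. clique J E S \<and> S0 \<subseteq> S}"
  have finJ: "finite J" using g unfolding graph_def by simp
  have CP: "C \<subseteq> Pow J" unfolding C_def clique_def by blast
  have finC: "finite C" using CP finJ by (meson finite_Pow_iff finite_subset)
  have S0C: "S0 \<in> C" unfolding C_def using c by simp
  define k where "k = Max (card ` C)"
  have "k \<in> card ` C" unfolding k_def using finC S0C by (intro Max_in) auto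
  then obtain B where BC: "B \<in> C" and kB: "card B = k" by auto
  have kmax: "\<And>T. T \<in> C \<Longrightarrow> card T \<le> k" unfolding k_def using finC by simp
  have "is_block J E B"
    unfolding is_block_def
  proof (intro conjI allI impI)
    show "clique J E B" using BC unfolding C_def by simp
    show "B \<noteq> {}" using BC ne unfolding C_def by blast
    fix T assume T: "clique J E T \<and> B \<subseteq> T"
    then have TC: "T \<in> C" using BC unfolding C_def by blast
    have finT: "finite T" using TC CP finJ by (meson PowD finite_subset subsetD)
    have "card B \<le> card T" using T finT by (simp add: card_mono)
    then have "card T = card B" using kmax[OF TC] kB by simp
    then show "T = B" using T finT by (metis card_subset_eq)
  qed
  then show ?thesis using BC unfolding C_def by blast
qed

lemma sum_load:
  fixes \<sigma> :: "'a \<rightharpoonup> nat"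
  assumes "finite (dom \<sigma>)" "ran \<sigma> \<subseteq> {..<m}"
  shows "(\<Sum>M<m. load \<sigma> M) = card (dom \<sigma>)"
proof -
  have eq: "dom \<sigma> = (\<Union>M\<in>{..<m}. {j. \<sigma> j = Some M})"
    using assms(2) by (auto simp: ran_def)
  have "card (\<Union>M\<in>{..<m}. {j. \<sigma> j = Some M}) = (\<Sum>M<m. card {j. \<sigma> j = Some M})"
  proof (rule card_UN_disjoint)
    show "finite {..<m}" by simp
    show "\<forall>i\<in>{..<m}. finite {j. \<sigma> j = Some i}"
      using assms(1) by (auto intro: finite_subset[rotated])
    show "\<forall>i\<in>{..<m}. \<forall>j\<in>{..<m}. i \<noteq> j \<longrightarrow> {ja. \<sigma> ja = Some i} \<inter> {ja. \<sigma> ja = Some j} = {}"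
      by auto
  qed
  then show ?thesis using eq unfolding load_def by simp
qed



theorem mainTheorem3:
  fixes J :: "'a set" and E :: "'a \<Rightarrow> 'a \<Rightarrow> bool" and m n d r :: nat
    and \<sigma> :: "'a \<rightharpoonup> nat"
  assumes "graph J E" and "block_graph J E"
    and "m \<ge> 2" and "n = card J" and "n \<ge> 1"
    and "clique_num_le J E m"
    and "n = d * (m - 1) + r" and "r \<le> m - 2"
    and "greedy_output J E m \<sigma>"
  shows "is_schedule J E m \<sigma>
    \<and> (\<forall>M < m. real (load \<sigma> M) \<le> ceiling (real n / real (m - 1)))
    \<and> (r = 0 \<longrightarrow> (\<exists>M < m. real (load \<sigma> M) < ceiling (real n / real (m - 1))))
    \<and> (r > 0 \<longrightarrow> card {M. M < m \<and> real (load \<sigma> M) < ceiling (real n / real (m - 1))} \<ge> m - r)"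
proof -
  note g = assms(1) and m2 = assms(3)
  obtain par ns where root: "rooting J E par" and pre: "preorder_traversal par {x. bc_node J E x} ns"
    and ex: "greedy_exec m par Map.empty (map projl (filter isl ns)) \<sigma>"
    using assms(9) unfolding greedy_output_def by blast
  define Bs where "Bs = map projl (filter isl ns)"
  have setBs: "set Bs = {B. is_block J E B}"
  proof -
    have "B \<in> set Bs \<longleftrightarrow> Inl B \<in> set ns" for B
      unfolding Bs_def by (force simp: image_iff)
    then show ?thesis using pre unfolding preorder_traversal_def bc_node_def by auto
  qed
  have dns: "distinct ns" using pre unfolding preorder_traversal_def by simp
  have sw: "sorted_wrt (\<lambda>a b. \<not> anc par b a) ns"
    unfolding sorted_wrt_iff_nth_less
  proof (intro allI impI)
    fix i j assume "i < j" "j < length ns"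
    then show "\<not> anc par (ns ! j) (ns ! i)" using pre unfolding preorder_traversal_def
      by (meson leD order.strict_trans)
  qed
  have nodes: "\<forall>x\<in>set ns. bc_node J E x" using pre unfolding preorder_traversal_def by simp
  have fr: "fresh_ok par (dom (Map.empty :: 'a \<rightharpoonup> nat)) Bs"
    unfolding Bs_def using fresh_from_order[OF root dns sw nodes, of "{}"] by simp
  have pu: "\<forall>B\<in>set Bs. \<forall>u. par (Inl B) = Some (Inr u) \<longrightarrow> u \<in> B"
  proof (intro ballI allI impI)
    fix B u assume "par (Inl B) = Some (Inr u)"
    then have "bc_adj J E (Inl B) (Inr u)" using root unfolding rooting_def by blast
    then show "u \<in> B" unfolding bc_adj_def by auto
  qed
  have inv0: "Inv m (load Map.empty) (card (dom (Map.empty :: 'a \<rightharpoonup> nat)))"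
    unfolding Inv_def load_def by simp
  note X1 = exec_main[OF ex[folded Bs_def]]
  note X2 = X1[OF fr]
  note X3 = X2[OF pu]
  note X4 = X3[OF _ _ m2]
  note X5 = X4[OF _ _ inv0]
  have f0: "finite (dom (Map.empty :: 'a \<rightharpoonup> nat))" by simp
  have r0: "ran (Map.empty :: 'a \<rightharpoonup> nat) \<subseteq> {..<m}" by simp
  note X6 = X5[OF f0 r0]
  have main: "dom \<sigma> = dom (Map.empty :: 'a \<rightharpoonup> nat) \<union> \<Union>(set Bs) \<and> Map.empty \<subseteq>\<^sub>m \<sigma> \<and> ran \<sigma> \<subseteq> {..<m}
        \<and> (\<forall>B\<in>set Bs. inj_on \<sigma> B) \<and> Inv m (load \<sigma>) (card (dom \<sigma>))"
    by (rule X6)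
  have finJ: "finite J" using g unfolding graph_def by simp
  have domJ: "dom \<sigma> = J"
  proof -
    have "\<Union>(set Bs) = J"
    proof
      show "\<Union>(set Bs) \<subseteq> J" using setBs unfolding is_block_def clique_def by blast
      show "J \<subseteq> \<Union>(set Bs)"
      proof
        fix v assume "v \<in> J"
        then have "clique J E {v}" unfolding clique_def by simp
        then obtain B where "is_block J E B" "{v} \<subseteq> B" using clique_in_block[OF g] by blast
        then show "v \<in> \<Union>(set Bs)" using setBs by blast
      qed
    qed
    then show ?thesis using main by simp
  qed
  have ranm: "ran \<sigma> \<subseteq> {..<m}" using main by blast
  have sched: "is_schedule J E m \<sigma>"
    unfolding is_schedule_def
  proof (intro conjI allI impI)
    show "dom \<sigma> = J" by (rule domJ)
    show "ran \<sigma> \<subseteq> {..<m}" by (rule ranm)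
    fix x y assume e: "E x y"
    have xy: "x \<in> J" "y \<in> J" "x \<noteq> y" "E y x" using g e unfolding graph_def by metis+
    then have "clique J E {x, y}" using e unfolding clique_def by auto
    then obtain B where B: "is_block J E B" "{x, y} \<subseteq> B" using clique_in_block[OF g] by blast
    then have "inj_on \<sigma> B" using main setBs by blast
    then show "\<sigma> x \<noteq> \<sigma> y" using B xy by (meson inj_on_contraD insert_subset)
  qed
  define K where "K = m - 1"
  have K1: "K \<ge> 1" using m2 K_def by simp
  have rK: "r < K" using assms(8) m2 K_def by simp
  have dq: "n div K = d" "n mod K = r" using assms(7) rK K_def
    by (simp_all add: div_mult_self1 mod_mult_self1 add.commute)
  have inv: "Inv m (load \<sigma>) n"
  proof -
    have "Inv m (load \<sigma>) (card (dom \<sigma>))" using main by blast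
    then show ?thesis unfolding domJ assms(4) .
  qed
  have lle: "\<forall>M<m. load \<sigma> M \<le> d + 1" and hc: "card {M. M<m \<and> d < load \<sigma> M} \<le> r"
    using inv dq unfolding Inv_def K_def by simp_all
  have ceil: "ceiling (real n / real K) = int (if r = 0 then d else d + 1)"
  proof (cases "r = 0")
    case True
    then have "real n / real K = real d" using assms(7) K_def K1 by (simp add: field_simps)
    then show ?thesis using True by simp
  next
    case False
    have "real n / real K = real d + real r / real K" using assms(7) K_def K1
      by (simp add: field_simps)
    moreover have "0 < real r / real K" "real r / real K < 1" using False rK K1 by simp_all
    ultimately show ?thesis using False by (simp add: ceiling_eq_iff)
  qed
  have cK: "ceiling (real n / real (m - 1)) = int (if r = 0 then d else d + 1)" using ceil K_def by simp
  show ?thesis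
  proof (intro conjI impI)
    show "is_schedule J E m \<sigma>" by (rule sched)
    show "\<forall>M<m. real (load \<sigma> M) \<le> real_of_int \<lceil>real n / real (m - 1)\<rceil>"
    proof (intro allI impI)
      fix M assume M: "M < m"
      have "load \<sigma> M \<le> (if r = 0 then d else d + 1)"
      proof (cases "r = 0")
        case True
        then have "{M. M<m \<and> d < load \<sigma> M} = {}" using hc by simp
        then show ?thesis using M True by auto
      next
        case False then show ?thesis using lle M by simp
      qed
      then show "real (load \<sigma> M) \<le> real_of_int \<lceil>real n / real (m - 1)\<rceil>" unfolding cK
        by (simp del: of_nat_add)
    qed
  next
    assume r0: "r = 0"
    have allle: "\<forall>M<m. load \<sigma> M \<le> d"
    proof -
      have "{M. M<m \<and> d < load \<sigma> M} = {}" using hc r0 by simp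
      then show ?thesis by auto
    qed
    have d1: "d \<ge> 1" using assms(5,7) r0 by (cases d) auto
    have "\<exists>M<m. load \<sigma> M < d"
    proof (rule ccontr)
      assume "\<not> (\<exists>M<m. load \<sigma> M < d)"
      then have "\<forall>M<m. load \<sigma> M = d" using allle by (meson le_antisym not_less)
      then have "(\<Sum>M<m. load \<sigma> M) = m * d" by simp
      moreover have "(\<Sum>M<m. load \<sigma> M) = n" using sum_load[of \<sigma> m] main domJ finJ assms(4) ranm by simp
      ultimately have "m * d = (m - 1) * d" using assms(7) r0 by (metis mult.commute add_0_right)
      then have "m = m - 1" using d1 by simp
      then show False using m2 by simp
    qed
    then show "\<exists>M<m. real (load \<sigma> M) < real_of_int \<lceil>real n / real (m - 1)\<rceil>" unfolding cK
      using r0 by simp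
  next
    assume rp: "0 < r"
    have "{M. M < m \<and> real (load \<sigma> M) < real_of_int \<lceil>real n / real (m - 1)\<rceil>} = {..<m} - {M. M<m \<and> d < load \<sigma> M}"
      unfolding cK using rp by auto
    moreover have "card ({..<m} - {M. M<m \<and> d < load \<sigma> M}) = m - card {M. M<m \<and> d < load \<sigma> M}"
      by (subst card_Diff_subset) auto
    ultimately show "m - r \<le> card {M. M < m \<and> real (load \<sigma> M) < real_of_int \<lceil>real n / real (m - 1)\<rceil>}"
      using hc by simp
  qed
qed


end
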